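(* If problem (BM$_{\mathbf n}$) has a spurious 2-critical point, then $C$ lies in the set $\underline{\mathcal V}\times\overline{\mathcal V}\times\{0^d\}+\operatorname{image}\mathcal{A}^*\subseteq\mathbb{S}^{\mathbf n}\times\mathbb{R}^d$ (Minkowski sum), where $\underline{\mathcal V}=\bigcup_{j\in[k]:\,p_j\le n_j}\big(\mathbb{S}^{n_1}\times\cdots\times\mathbb{S}^{n_{j-1}}\times\mathbb{S}^{n_j}_{n_j-p_j}\times\mathbb{S}^{n_{j+1}}\times\cdots\times\mathbb{S}^{n_k}\big)\subseteq\mathbb{S}^{n_1}\times\cdots\times\mathbb{S}^{n_k}$ and $\overline{\mathcal V}=\bigcup_{(r_{k+1},\dots,r_\ell)}\big(\mathbb{S}^{n_{k+1}}_{n_{k+1}-r_{k+1}}\times\cdots\times\mathbb{S}^{n_\ell}_{n_\ell-r_\ell}\big)\subseteq\mathbb{S}^{n_{k+1}}\times\cdots\times\mathbb{S}^{n_\ell}$, the last union being over all possible rank tuples, and $\mathbb{S}^{r}_{s}=\{Z\in\mathbb{S}^r:\operatorname{rank}Z\le s\}$.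
   Context: Let $\mathbb{S}^{r}$ denote real symmetric $r\times r$ matrices, $\mathbb{S}^r_+$ the PSD cone, $A\bullet B=\operatorname{trace}(A^TB)$. Let $\mathbf n=(n_1,\dots,n_\ell)$, $d\ge 0$, $1\le k\le \ell$, $\mathbb{S}^{\mathbf n}=\mathbb{S}^{n_1}\times\cdots\times\mathbb{S}^{n_\ell}$, $\mathbb{S}^{\mathbf n}_+=\mathbb{S}^{n_1}_+\times\cdots\times\mathbb{S}^{n_\ell}_+$, with the inner product $\langle\cdot,\cdot\rangle$ on $\mathbb{S}^{\mathbf n}\times\mathbb{R}^d$ being the sum of trace inner products and the dot product. Let $C\in\mathbb{S}^{\mathbf n}\times\mathbb{R}^d$, $b\in\mathbb{R}^m$, and $\mathcal{A}:\mathbb{S}^{\mathbf n}\times\mathbb{R}^d\to\mathbb{R}^m$ linear, written $\mathcal{A}(X_1,\dots,X_\ell,x)=\sum_j\mathcal{A}_j(X_j)+\mathcal{A}_0(x)$ with $\mathcal{A}_j(X_j)=(A_{i,j}\bullet X_j)_{i\in[m]}$, $A_{i,j}\in\mathbb{S}^{n_j}$ (this formula also defines $\mathcal{A}_j$ on nonsymmetric matrices); $\mathcal{A}^*$ is its adjoint. Let $\mathscr{X}=\{X=(X_1,\dots,X_\ell,x)\in\mathbb{S}^{\mathbf n}_+\times\mathbb{R}^d:\mathcal{A}(X)=b\}$, assumed nonempty, with $\min_{X\in\mathscr{X}}\langle C,X\rangle$ attained. For positive integers $p_1,\dots,p_k$, let $Y=(Y_1,\dots,Y_k)$, $Y_j\in\mathbb{R}^{n_j\times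 p_j}$, $q(Y)=(Y_1Y_1^T,\dots,Y_kY_k^T)$, $\overline X=(X_{k+1},\dots,X_\ell)$. Problem (BM$_{\mathbf n}$) is $\min_{Y,\overline X,x}\langle C,(q(Y),\overline X,x)\rangle$ subject to $(q(Y),\overline X,x)\in\mathscr{X}$. For $\lambda\in\mathbb{R}^m$ let $S(\lambda)=C-\mathcal{A}^*(\lambda)$ with components $S_j(\lambda)\in\mathbb{S}^{n_j}$ and $s(\lambda)\in\mathbb{R}^d$. A point $(Y,\overline X,x)$ is 2-critical if $(q(Y),\overline X,x)\in\mathscr{X}$ and there is $\lambda\in\mathbb{R}^m$ with $S_j(\lambda)\in\mathbb{S}^{n_j}_+$ for $j>k$, $\sum_{j>k}S_j(\lambda)\bullet X_j=0$, $s(\lambda)=0$, $S_j(\lambda)Y_j=0$ for $j\in[k]$, and, for each $j\in[k]$, $S_j(\lambda)\bullet U_jU_j^T\ge0$ for all $U_j\in\mathbb{R}^{n_j\times p_j}$ with $\mathcal{A}_j(U_jY_j^T)=0$. It is spurious if it is not a global minimizer of (BM$_{\mathbf n}$). A tuple $(r_{k+1},\dots,r_\ell)$ is a possible rank tuple if some $X\in\mathscr{X}$ has $\operatorname{rank}X_j=r_j$ for all $j>k$. *)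

theory Defs
  imports "Jordan_Normal_Form.DL_Rank"
begin

text \<open>Block matrices of varying sizes are represented as JNF matrices ('real mat')
  with explicit dimension constraints. Blocks are indexed by j in {1..l},
  constraints by i in {0..<m} (vectors in R^m are 'real vec' of dimension m).\<close>

definition mtrace :: "real mat \<Rightarrow> real" where
  "mtrace M = (\<Sum>i<dim_row M. M $$ (i,i))"

definition frob :: "real mat \<Rightarrow> real mat \<Rightarrow> real" where
  "frob P Q = mtrace (transpose_mat P * Q)"

definition sym_mat :: "nat \<Rightarrow> real mat \<Rightarrow> bool" where
  "sym_mat r M \<longleftrightarrow> M \<in> carrier_mat r r \<and> transpose_mat M = M"

definition psd_mat :: "nat \<Rightarrow> real mat \<Rightarrow> bool" where
  "psd_mat r M \<longleftrightarrow> sym_mat r M \<and> (\<forall>v\<in>carrier_vec r. 0 \<le> v \<bullet> (M *\<^sub>v v))"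

definition mrank :: "real mat \<Rightarrow> nat" where
  "mrank M = vec_space.rank (dim_row M) M"

definition Ablk :: "nat \<Rightarrow> (nat \<Rightarrow> nat \<Rightarrow> real mat) \<Rightarrow> nat \<Rightarrow> real mat \<Rightarrow> real vec" where
  "Ablk m A j M = vec m (\<lambda>i. frob (A i j) M)"

definition Aop :: "nat \<Rightarrow> nat \<Rightarrow> (nat \<Rightarrow> nat \<Rightarrow> real mat) \<Rightarrow> real mat
     \<Rightarrow> (nat \<Rightarrow> real mat) \<Rightarrow> real vec \<Rightarrow> real vec" where
  "Aop m l A A0 X x = vec m (\<lambda>i. (\<Sum>j=1..l. frob (A i j) (X j)) + row A0 i \<bullet> x)"

definition adjblk :: "nat \<Rightarrow> (nat \<Rightarrow> nat) \<Rightarrow> (nat \<Rightarrow> nat \<Rightarrow> real mat) \<Rightarrow> real vec \<Rightarrow> nat \<Rightarrow> real mat" where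
  "adjblk m n A lam j = mat (n j) (n j) (\<lambda>(r,s). \<Sum>i<m. lam $ i * A i j $$ (r,s))"

definition Sblk :: "nat \<Rightarrow> (nat \<Rightarrow> nat) \<Rightarrow> (nat \<Rightarrow> nat \<Rightarrow> real mat) \<Rightarrow> (nat \<Rightarrow> real mat)
     \<Rightarrow> real vec \<Rightarrow> nat \<Rightarrow> real mat" where
  "Sblk m n A C lam j = C j - adjblk m n A lam j"

definition svec :: "real mat \<Rightarrow> real vec \<Rightarrow> real vec \<Rightarrow> real vec" where
  "svec A0 c lam = c - transpose_mat A0 *\<^sub>v lam"

definition feas :: "(nat \<Rightarrow> nat) \<Rightarrow> nat \<Rightarrow> nat \<Rightarrow> nat \<Rightarrow> (nat \<Rightarrow> nat \<Rightarrow> real mat) \<Rightarrow> real mat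
     \<Rightarrow> real vec \<Rightarrow> (nat \<Rightarrow> real mat) \<Rightarrow> real vec \<Rightarrow> bool" where
  "feas n l d m A A0 b X x \<longleftrightarrow>
     (\<forall>j\<in>{1..l}. psd_mat (n j) (X j)) \<and> x \<in> carrier_vec d \<and> Aop m l A A0 X x = b"

definition obj :: "nat \<Rightarrow> (nat \<Rightarrow> real mat) \<Rightarrow> real vec \<Rightarrow> (nat \<Rightarrow> real mat) \<Rightarrow> real vec \<Rightarrow> real" where
  "obj l C c X x = (\<Sum>j=1..l. frob (C j) (X j)) + c \<bullet> x"

definition qY :: "nat \<Rightarrow> (nat \<Rightarrow> real mat) \<Rightarrow> (nat \<Rightarrow> real mat) \<Rightarrow> nat \<Rightarrow> real mat" where
  "qY k Y Xb = (\<lambda>j. if j \<le> k then Y j * transpose_mat (Y j) else Xb j)"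

definition bm_feas :: "(nat \<Rightarrow> nat) \<Rightarrow> nat \<Rightarrow> nat \<Rightarrow> nat \<Rightarrow> nat \<Rightarrow> (nat \<Rightarrow> nat \<Rightarrow> real mat) \<Rightarrow> real mat
     \<Rightarrow> real vec \<Rightarrow> (nat \<Rightarrow> nat) \<Rightarrow> (nat \<Rightarrow> real mat) \<Rightarrow> (nat \<Rightarrow> real mat) \<Rightarrow> real vec \<Rightarrow> bool" where
  "bm_feas n l k d m A A0 b p Y Xb x \<longleftrightarrow>
     (\<forall>j\<in>{1..k}. Y j \<in> carrier_mat (n j) (p j)) \<and> feas n l d m A A0 b (qY k Y Xb) x"

definition bm_global_min :: "(nat \<Rightarrow> nat) \<Rightarrow> nat \<Rightarrow> nat \<Rightarrow> nat \<Rightarrow> nat \<Rightarrow> (nat \<Rightarrow> nat \<Rightarrow> real mat) \<Rightarrow> real mat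
     \<Rightarrow> real vec \<Rightarrow> (nat \<Rightarrow> real mat) \<Rightarrow> real vec \<Rightarrow> (nat \<Rightarrow> nat)
     \<Rightarrow> (nat \<Rightarrow> real mat) \<Rightarrow> (nat \<Rightarrow> real mat) \<Rightarrow> real vec \<Rightarrow> bool" where
  "bm_global_min n l k d m A A0 b C c p Y Xb x \<longleftrightarrow>
     bm_feas n l k d m A A0 b p Y Xb x \<and>
     (\<forall>Y' Xb' x'. bm_feas n l k d m A A0 b p Y' Xb' x' \<longrightarrow>
        obj l C c (qY k Y Xb) x \<le> obj l C c (qY k Y' Xb') x')"

definition two_critical :: "(nat \<Rightarrow> nat) \<Rightarrow> nat \<Rightarrow> nat \<Rightarrow> nat \<Rightarrow> nat \<Rightarrow> (nat \<Rightarrow> nat \<Rightarrow> real mat) \<Rightarrow> real mat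
     \<Rightarrow> real vec \<Rightarrow> (nat \<Rightarrow> real mat) \<Rightarrow> real vec \<Rightarrow> (nat \<Rightarrow> nat)
     \<Rightarrow> (nat \<Rightarrow> real mat) \<Rightarrow> (nat \<Rightarrow> real mat) \<Rightarrow> real vec \<Rightarrow> bool" where
  "two_critical n l k d m A A0 b C c p Y Xb x \<longleftrightarrow>
     bm_feas n l k d m A A0 b p Y Xb x \<and>
     (\<exists>lam\<in>carrier_vec m.
        (\<forall>j\<in>{k+1..l}. psd_mat (n j) (Sblk m n A C lam j)) \<and>
        (\<Sum>j=k+1..l. frob (Sblk m n A C lam j) (Xb j)) = 0 \<and>
        svec A0 c lam = 0\<^sub>v d \<and>
        (\<forall>j\<in>{1..k}. Sblk m n A C lam j * Y j = 0\<^sub>m (n j) (p j)) \<and>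
        (\<forall>j\<in>{1..k}. \<forall>U\<in>carrier_mat (n j) (p j).
            Ablk m A j (U * transpose_mat (Y j)) = 0\<^sub>v m \<longrightarrow>
            0 \<le> frob (Sblk m n A C lam j) (U * transpose_mat U)))"

definition spurious_two_critical :: "(nat \<Rightarrow> nat) \<Rightarrow> nat \<Rightarrow> nat \<Rightarrow> nat \<Rightarrow> nat \<Rightarrow> (nat \<Rightarrow> nat \<Rightarrow> real mat) \<Rightarrow> real mat
     \<Rightarrow> real vec \<Rightarrow> (nat \<Rightarrow> real mat) \<Rightarrow> real vec \<Rightarrow> (nat \<Rightarrow> nat)
     \<Rightarrow> (nat \<Rightarrow> real mat) \<Rightarrow> (nat \<Rightarrow> real mat) \<Rightarrow> real vec \<Rightarrow> bool" where
  "spurious_two_critical n l k d m A A0 b C c p Y Xb x \<longleftrightarrow>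
     two_critical n l k d m A A0 b C c p Y Xb x \<and>
     \<not> bm_global_min n l k d m A A0 b C c p Y Xb x"

end

theory Submission
  imports Defs "Jordan_Normal_Form.Matrix_Kernel"
begin

definition qf :: "nat \<Rightarrow> real mat \<Rightarrow> (nat \<Rightarrow> real) \<Rightarrow> (nat \<Rightarrow> real) \<Rightarrow> real" where
  "qf n X f g = (\<Sum>r<n. \<Sum>s<n. f r * X $$ (r,s) * g s)"

lemma scalar_mult_qf:
  assumes "X \<in> carrier_mat n n" "v \<in> carrier_vec n"
  shows "v \<bullet> (X *\<^sub>v v) = qf n X (($) v) (($) v)"
  using assms unfolding qf_def scalar_prod_def mult_mat_vec_def
  by (auto simp: sum_distrib_left row_def mult.assoc intro!: sum.cong)

lemma psd_qf:
  assumes "psd_mat n X"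
  shows "0 \<le> qf n X f f"
proof -
  have X: "X \<in> carrier_mat n n" using assms unfolding psd_mat_def sym_mat_def by auto
  have "0 \<le> vec n f \<bullet> (X *\<^sub>v vec n f)" using assms unfolding psd_mat_def by auto
  also have "\<dots> = qf n X f f" using scalar_mult_qf[OF X, of "vec n f"]
    unfolding qf_def by simp
  finally show ?thesis .
qed

lemma psd_sym_entry:
  assumes "psd_mat n X" "r < n" "s < n"
  shows "X $$ (r,s) = X $$ (s,r)"
proof -
  have "X \<in> carrier_mat n n" "transpose_mat X = X" using assms unfolding psd_mat_def sym_mat_def by auto
  then show ?thesis using assms by (metis carrier_matD index_transpose_mat(1))
qed

lemma qf_sym:
  assumes "psd_mat n X"
  shows "qf n X f g = qf n X g f"
  unfolding qf_def
  apply (subst sum.swap)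
  apply (intro sum.cong refl)
  using psd_sym_entry[OF assms] by (simp add: mult.commute mult.left_commute)

lemma quad_disc:
  fixes \<alpha> \<beta> \<gamma> :: real
  assumes "\<forall>t. 0 \<le> \<alpha> + 2 * t * \<beta> + t^2 * \<gamma>" "0 \<le> \<gamma>"
  shows "\<beta>^2 \<le> \<alpha> * \<gamma>"
proof (cases "\<gamma> = 0")
  case True
  have "\<beta> = 0"
  proof (rule ccontr)
    assume "\<beta> \<noteq> 0"
    have "0 \<le> \<alpha> + 2 * (-(\<alpha>+1)/(2*\<beta>)) * \<beta> + (-(\<alpha>+1)/(2*\<beta>))^2 * \<gamma>" using assms by blast
    then show False using True \<open>\<beta> \<noteq> 0\<close> by (simp add: field_simps)
  qed
  then show ?thesis using True by simp
next
  case False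
  then have g: "0 < \<gamma>" using assms(2) by simp
  have "0 \<le> \<alpha> + 2 * (-\<beta>/\<gamma>) * \<beta> + (-\<beta>/\<gamma>)^2 * \<gamma>" using assms by blast
  then have "0 \<le> (\<alpha> + 2 * (-\<beta>/\<gamma>) * \<beta> + (-\<beta>/\<gamma>)^2 * \<gamma>) * \<gamma>" using g by simp
  also have "\<dots> = \<alpha> * \<gamma> - \<beta>^2" using g by (simp add: field_simps power2_eq_square)
  finally show ?thesis by simp
qed

lemma qf_expand:
  "qf n X (\<lambda>r. f r + t * g r) (\<lambda>r. f r + t * g r) =
   qf n X f f + t * qf n X f g + t * qf n X g f + t^2 * qf n X g g"
  unfolding qf_def
  by (simp add: algebra_simps sum.distrib sum_distrib_left power2_eq_square)

lemma psd_cs: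
  assumes "psd_mat n X"
  shows "(qf n X f g)^2 \<le> qf n X f f * qf n X g g"
proof (rule quad_disc)
  show "0 \<le> qf n X g g" by (rule psd_qf[OF assms])
  show "\<forall>t. 0 \<le> qf n X f f + 2 * t * qf n X f g + t\<^sup>2 * qf n X g g"
  proof
    fix t
    have "0 \<le> qf n X (\<lambda>r. f r + t * g r) (\<lambda>r. f r + t * g r)" by (rule psd_qf[OF assms])
    then show "0 \<le> qf n X f f + 2 * t * qf n X f g + t\<^sup>2 * qf n X g g"
      unfolding qf_expand qf_sym[OF assms, of g f] by simp
  qed
qed


lemma if01_mult: "(if P then 1 else 0) * (x::real) = (if P then x else 0)"
  "(x::real) * (if P then 1 else 0) = (if P then x else 0)" by auto

lemma qf_unit:
  assumes "a < n" "b < n"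
  shows "qf n X (\<lambda>r. if r = a then 1 else 0) (\<lambda>s. if s = b then 1 else 0) = X $$ (a,b)"
  unfolding qf_def if01_mult using assms by (simp add: sum.delta)

lemma qf_unit_right:
  assumes "b < n"
  shows "qf n X f (\<lambda>s. if s = b then 1 else 0) = (\<Sum>r<n. f r * X $$ (r,b))"
  unfolding qf_def if01_mult using assms by (simp add: sum.delta)

lemma psd_diag_nonneg:
  assumes "psd_mat n X" "a < n"
  shows "0 \<le> X $$ (a,a)"
  using psd_qf[OF assms(1), of "\<lambda>r. if r = a then 1 else 0"] qf_unit[OF assms(2) assms(2)] by simp

lemma psd_offdiag:
  assumes "psd_mat n X" "a < n" "b < n"
  shows "(X $$ (a,b))^2 \<le> X $$ (a,a) * X $$ (b,b)"
  using psd_cs[OF assms(1), of "\<lambda>r. if r = a then 1 else 0" "\<lambda>r. if r = b then 1 else 0"]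
    qf_unit[OF assms(2) assms(3)] qf_unit[OF assms(2) assms(2)] qf_unit[OF assms(3) assms(3)] by simp

lemma psd_factor_aux:
  "card {i. i < n \<and> X $$ (i,i) \<noteq> 0} = N \<Longrightarrow> psd_mat n X \<Longrightarrow>
   \<exists>(q::nat) V. \<forall>r<n. \<forall>s<n. X $$ (r,s) = (\<Sum>t<q. V t r * V t s)"
proof (induction N arbitrary: X rule: less_induct)
  case (less N X)
  have Xc: "X \<in> carrier_mat n n" using less.prems unfolding psd_mat_def sym_mat_def by auto
  show ?case
  proof (cases "\<exists>i<n. X $$ (i,i) \<noteq> 0")
    case False
    have Z: "X $$ (r,s) = 0" if "r < n" "s < n" for r s
      using psd_offdiag[OF less.prems(2) that] False that by simp
    show ?thesis
    proof (intro exI)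
      show "\<forall>r<n. \<forall>s<n. X $$ (r,s) = (\<Sum>t<(0::nat). (\<lambda>_ _. 0::real) t r * (\<lambda>_ _. 0) t s)"
        using Z by simp
    qed
  next
    case True
    then obtain i where i: "i < n" "X $$ (i,i) \<noteq> 0" by auto
    define a where "a = X $$ (i,i)"
    have apos: "0 < a" using psd_diag_nonneg[OF less.prems(2) i(1)] i(2) unfolding a_def by simp
    define u where "u r = X $$ (r,i) / sqrt a" for r
    define X' where "X' = mat n n (\<lambda>(r,s). X $$ (r,s) - u r * u s)"
    have X'c: "X' \<in> carrier_mat n n" unfolding X'_def by simp
    have X'e: "X' $$ (r,s) = X $$ (r,s) - u r * u s" if "r < n" "s < n" for r s
      unfolding X'_def using that by simp
    have qfX': "qf n X' f f = qf n X f f - (\<Sum>r<n. f r * u r)^2" for f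
    proof -
      have "qf n X' f f = (\<Sum>r<n. \<Sum>s<n. f r * X $$ (r,s) * f s - (f r * u r) * (f s * u s))"
        unfolding qf_def by (intro sum.cong refl) (simp add: X'e algebra_simps)
      also have "\<dots> = qf n X f f - (\<Sum>r<n. f r * u r)^2"
        unfolding qf_def power2_eq_square sum_product by (simp add: sum_subtractf)
      finally show ?thesis .
    qed
    have sumu: "(\<Sum>r<n. f r * u r) = qf n X f (\<lambda>s. if s = i then 1 else 0) / sqrt a" for f
      unfolding qf_unit_right[OF i(1)] u_def by (simp add: sum_divide_distrib)
    have psd': "psd_mat n X'"
      unfolding psd_mat_def sym_mat_def
    proof (intro conjI ballI)
      show "X' \<in> carrier_mat n n" by (rule X'c)
      show "transpose_mat X' = X'"
        by (rule eq_matI) (auto simp: X'_def psd_sym_entry[OF less.prems(2)])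
      fix v :: "real vec" assume v: "v \<in> carrier_vec n"
      let ?f = "(($) v)"
      let ?e = "\<lambda>s. if s = i then 1 else (0::real)"
      have cs: "(qf n X ?f ?e)^2 \<le> qf n X ?f ?f * a"
        using psd_cs[OF less.prems(2), of ?f ?e] qf_unit[OF i(1) i(1)] unfolding a_def by simp
      have "v \<bullet> (X' *\<^sub>v v) = qf n X ?f ?f - (qf n X ?f ?e)^2 / a"
        unfolding scalar_mult_qf[OF X'c v] qfX' sumu using apos by (simp add: power_divide)
      also have "\<dots> \<ge> 0" using cs apos by (simp add: field_simps)
      finally show "0 \<le> v \<bullet> (X' *\<^sub>v v)" .
    qed
    have sub: "{j. j < n \<and> X' $$ (j,j) \<noteq> 0} \<subseteq> {j. j < n \<and> X $$ (j,j) \<noteq> 0} - {i}"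
    proof
      fix j assume j: "j \<in> {j. j < n \<and> X' $$ (j,j) \<noteq> 0}"
      then have jn: "j < n" by simp
      have "j \<noteq> i"
      proof
        assume "j = i"
        then have "X' $$ (j,j) = a - (X $$ (i,i) / sqrt a)^2" using X'e[OF jn jn] unfolding u_def a_def
          by (simp add: power2_eq_square)
        also have "\<dots> = 0" using apos unfolding a_def by (simp add: power_divide power2_eq_square)
        finally show False using j by simp
      qed
      moreover have "X $$ (j,j) \<noteq> 0"
      proof
        assume z: "X $$ (j,j) = 0"
        have "(X $$ (j,i))^2 \<le> 0" using psd_offdiag[OF less.prems(2) jn i(1)] z by simp
        then have "X $$ (j,i) = 0" by simp
        then have "X' $$ (j,j) = 0" using X'e[OF jn jn] z unfolding u_def by simp
        then show False using j by simp
      qed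
      ultimately show "j \<in> {j. j < n \<and> X $$ (j,j) \<noteq> 0} - {i}" using jn by simp
    qed
    have "card {j. j < n \<and> X' $$ (j,j) \<noteq> 0} < N"
    proof -
      have "card {j. j < n \<and> X' $$ (j,j) \<noteq> 0} \<le> card ({j. j < n \<and> X $$ (j,j) \<noteq> 0} - {i})"
        by (rule card_mono[OF _ sub]) auto
      also have "\<dots> < card {j. j < n \<and> X $$ (j,j) \<noteq> 0}"
        by (rule card_Diff1_less) (use i in auto)
      finally show ?thesis using less.prems(1) by simp
    qed
    from less.IH[OF this refl psd'] obtain q :: nat and V where
      V: "\<forall>r<n. \<forall>s<n. X' $$ (r,s) = (\<Sum>t<q. V t r * V t s)" by blast
    define V' where "V' = V(q := u)"
    have F: "\<forall>r<n. \<forall>s<n. X $$ (r,s) = (\<Sum>t<Suc q. V' t r * V' t s)"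
    proof (intro allI impI)
      fix r s assume rs: "r < n" "s < n"
      have "(\<Sum>t<Suc q. V' t r * V' t s) = (\<Sum>t<q. V t r * V t s) + u r * u s"
        unfolding V'_def by simp
      also have "\<dots> = X $$ (r,s)" using V rs X'e[OF rs] by simp
      finally show "X $$ (r,s) = (\<Sum>t<Suc q. V' t r * V' t s)" by simp
    qed
    show ?thesis by (intro exI[of _ "Suc q"] exI[of _ V']) (fact F)
  qed
qed

lemma psd_factor:
  assumes "psd_mat n X"
  shows "\<exists>(q::nat) V. \<forall>r<n. \<forall>s<n. X $$ (r,s) = (\<Sum>t<q. V t r * V t s)"
  using psd_factor_aux[OF refl assms] .

lemma frob_entry:
  assumes "P \<in> carrier_mat r c" "Q \<in> carrier_mat r c"
  shows "frob P Q = (\<Sum>a<c. \<Sum>b<r. P $$ (b,a) * Q $$ (b,a))"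
  using assms unfolding frob_def mtrace_def
  by (auto simp: scalar_prod_def intro!: sum.cong)

lemma psd_carrier: "psd_mat n X \<Longrightarrow> X \<in> carrier_mat n n"
  unfolding psd_mat_def sym_mat_def by auto

lemma psd_frob_fact:
  assumes S: "psd_mat n S" and X: "\<forall>r<n. \<forall>s<n. X $$ (r,s) = (\<Sum>t<q. V t r * V t s)"
    and Xc: "X \<in> carrier_mat n n"
  shows "frob S X = (\<Sum>t<q. qf n S (V t) (V t))"
proof -
  have "frob S X = (\<Sum>a<n. \<Sum>b<n. S $$ (b,a) * (\<Sum>t<q. V t b * V t a))"
    using frob_entry[OF psd_carrier[OF S] Xc] X by simp
  also have "\<dots> = (\<Sum>a<n. \<Sum>b<n. \<Sum>t<q. V t b * S $$ (b,a) * V t a)"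
    by (simp add: sum_distrib_left algebra_simps)
  also have "\<dots> = (\<Sum>b<n. \<Sum>a<n. \<Sum>t<q. V t b * S $$ (b,a) * V t a)"
    by (rule sum.swap)
  also have "\<dots> = (\<Sum>b<n. \<Sum>t<q. \<Sum>a<n. V t b * S $$ (b,a) * V t a)"
    by (simp add: sum.swap[of _ "{..<n}" "{..<q}"])
  also have "\<dots> = (\<Sum>t<q. \<Sum>b<n. \<Sum>a<n. V t b * S $$ (b,a) * V t a)"
    by (rule sum.swap)
  finally show ?thesis unfolding qf_def .
qed

lemma psd_null:
  assumes S: "psd_mat n S" and z: "qf n S f f = 0" and r: "r < n"
  shows "(\<Sum>s<n. S $$ (r,s) * f s) = 0"
proof -
  define g where "g r = (\<Sum>s<n. S $$ (r,s) * f s)" for r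
  have "(qf n S g f)^2 \<le> 0" using psd_cs[OF S, of g f] z by simp
  then have "qf n S g f = 0" by simp
  moreover have "qf n S g f = (\<Sum>r<n. (g r)^2)"
    unfolding qf_def g_def by (simp add: sum_distrib_left power2_eq_square mult.assoc)
  ultimately have "(\<Sum>r<n. (g r)^2) = 0" by simp
  then have "(g r)^2 = 0" using r by (subst (asm) sum_nonneg_eq_0_iff) auto
  then show ?thesis unfolding g_def by simp
qed

lemma psd_frob_nonneg:
  assumes S: "psd_mat n S" and X: "psd_mat n X"
  shows "0 \<le> frob S X"
proof -
  obtain q :: nat and V where V: "\<forall>r<n. \<forall>s<n. X $$ (r,s) = (\<Sum>t<q. V t r * V t s)"
    using psd_factor[OF X] by blast
  show ?thesis unfolding psd_frob_fact[OF S V psd_carrier[OF X]]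
    by (rule sum_nonneg) (rule psd_qf[OF S])
qed

lemma psd_frob_zero:
  assumes S: "psd_mat n S" and X: "psd_mat n X" and z: "frob S X = 0"
  shows "S * X = 0\<^sub>m n n"
proof -
  obtain q :: nat and V where V: "\<forall>r<n. \<forall>s<n. X $$ (r,s) = (\<Sum>t<q. V t r * V t s)"
    using psd_factor[OF X] by blast
  have "(\<Sum>t<q. qf n S (V t) (V t)) = 0" using z psd_frob_fact[OF S V psd_carrier[OF X]] by simp
  then have q0: "qf n S (V t) (V t) = 0" if "t < q" for t
    using that by (subst (asm) sum_nonneg_eq_0_iff) (auto intro: psd_qf[OF S])
  have Sc: "S \<in> carrier_mat n n" and Xc: "X \<in> carrier_mat n n" using S X psd_carrier by auto
  show ?thesis
  proof (rule eq_matI)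
    fix r s assume r: "r < dim_row (0\<^sub>m n n :: real mat)" and s: "s < dim_col (0\<^sub>m n n :: real mat)"
    then have rs: "r < n" "s < n" by auto
    have "(S * X) $$ (r,s) = (\<Sum>k<n. S $$ (r,k) * X $$ (k,s))"
      using Sc Xc rs by (simp add: scalar_prod_def lessThan_atLeast0)
    also have "\<dots> = (\<Sum>k<n. S $$ (r,k) * (\<Sum>t<q. V t k * V t s))"
      using V rs by simp
    also have "\<dots> = (\<Sum>t<q. V t s * (\<Sum>k<n. S $$ (r,k) * V t k))"
      by (simp add: sum_distrib_left algebra_simps sum.swap[of _ "{..<n}" "{..<q}"])
    also have "\<dots> = 0" using psd_null[OF S q0 rs(1)] by simp
    finally show "(S * X) $$ (r,s) = 0\<^sub>m n n $$ (r,s)" using rs by simp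
  qed (use Sc Xc in auto)
qed

lemma rank_mult_zero:
  fixes S B :: "real mat"
  assumes S: "S \<in> carrier_mat n n" and B: "B \<in> carrier_mat n q" and SB: "S * B = 0\<^sub>m n q"
  shows "vec_space.rank n S + vec_space.rank n B \<le> n"
proof -
  interpret V: vec_space "TYPE(real)" n .
  define T where "T = (\<lambda>v. S *\<^sub>v v)"
  interpret L: linear_map class_ring "module_vec TYPE(real) n" "module_vec TYPE(real) n" T
  proof (unfold_locales)
    show "T \<in> LinearCombinations.module_hom class_ring (module_vec TYPE(real) n) (module_vec TYPE(real) n)"
      unfolding LinearCombinations.module_hom_def T_def using S
      by (auto simp: module_vec_simps class_ring_simps mult_add_distrib_mat_vec mult_mat_vec)
  qed
  have dimn: "vectorspace.dim class_ring (V.vs L.imT) + vectorspace.dim class_ring (V.vs L.kerT) = n"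
    using L.rank_nullity V.fin_dim V.dim_is_n by simp
  have colsS: "set (cols S) \<subseteq> carrier_vec n" using S cols_dim by blast
  have colsB: "set (cols B) \<subseteq> carrier_vec n" using B cols_dim by blast
  have spanS: "V.span (set (cols S)) = {S *\<^sub>v v | v. v \<in> carrier_vec n}"
  proof -
    have "V.span (set (cols S)) = V.span_list (cols S)" using V.span_list_as_span[OF colsS] by simp
    also have "\<dots> = {S *\<^sub>v v | v. v \<in> carrier_vec n}"
    proof -
      have LC: "V.lincomb_list c (cols S) = S *\<^sub>v vec n c" for c
      proof -
        have "\<forall>w\<in>set (cols S). dim_vec w = n" using colsS by auto
        then have "V.lincomb_list c (cols S) = mat_of_cols n (cols S) *\<^sub>v vec n c"
          using V.lincomb_list_as_mat_mult[of "cols S" c] S by simp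
        also have "mat_of_cols n (cols S) = S" using S mat_of_cols_cols[of S] by simp
        finally show ?thesis .
      qed
      have VV: "S *\<^sub>v v = S *\<^sub>v vec n (($) v)" if "v \<in> carrier_vec n" for v
        using that by (metis carrier_vecD eq_vecI index_vec dim_vec)
      show ?thesis
      proof (intro equalityI subsetI)
        fix x assume "x \<in> V.span_list (cols S)"
        then obtain c where "x = V.lincomb_list c (cols S)" by (rule V.in_span_listE)
        then have "x = S *\<^sub>v vec n c" using LC by simp
        moreover have "vec n c \<in> carrier_vec n" by simp
        ultimately show "x \<in> {S *\<^sub>v v |v. v \<in> carrier_vec n}" by blast
      next
        fix x assume "x \<in> {S *\<^sub>v v |v. v \<in> carrier_vec n}"
        then obtain v where v: "v \<in> carrier_vec n" "x = S *\<^sub>v v" by blast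
        then have "x = V.lincomb_list (($) v) (cols S)" using LC[of "($) v"] VV[OF v(1)] by simp
        then show "x \<in> V.span_list (cols S)" by (intro V.in_span_listI) (auto simp: class_ring_simps)
      qed
    qed
    finally show ?thesis .
  qed
  have im: "L.imT = V.span (set (cols S))"
  proof -
    have "L.imT = T ` carrier_vec n" using L.im_def by (simp add: module_vec_simps)
    then show ?thesis unfolding spanS T_def by auto
  qed
  have rankS: "V.rank S = vectorspace.dim class_ring (V.vs L.imT)"
    unfolding V.rank_def im by simp
  thm L.im_def mod_hom.im_def
  have kerT: "L.kerT = mat_kernel S"
  proof -
    have "L.kerT = {v. v \<in> carrier_vec n \<and> T v = 0\<^sub>v n}" using L.ker_def by (simp add: module_vec_simps)
    then show ?thesis unfolding T_def mat_kernel_def using S by auto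
  qed
  have spanB: "V.span (set (cols B)) \<subseteq> L.kerT"
  proof -
    have "V.span (set (cols B)) = V.span_list (cols B)" using V.span_list_as_span[OF colsB] by simp
    also have "\<dots> \<subseteq> mat_kernel S"
    proof
      fix x assume "x \<in> V.span_list (cols B)"
      then obtain c where xc: "x = V.lincomb_list c (cols B)" by (rule V.in_span_listE)
      have "\<forall>w\<in>set (cols B). dim_vec w = n" using colsB by auto
      then have "x = mat_of_cols n (cols B) *\<^sub>v vec q c"
        using V.lincomb_list_as_mat_mult[of "cols B" c] B xc by simp
      also have "mat_of_cols n (cols B) = B" using B mat_of_cols_cols[of B] by simp
      finally have x: "x = B *\<^sub>v vec q c" .
      have "S *\<^sub>v x = (S * B) *\<^sub>v vec q c" unfolding x using S B by (simp add: assoc_mult_mat_vec)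
      also have "\<dots> = 0\<^sub>v n" unfolding SB by (intro eq_vecI) (auto simp: scalar_prod_def)
      finally show "x \<in> mat_kernel S" unfolding mat_kernel_def using x B S by simp
    qed
    finally show ?thesis unfolding kerT .
  qed
  have subK: "subspace class_ring L.kerT V.V" by (rule L.kerT_is_subspace)
  have subB: "subspace class_ring (V.span (set (cols B))) V.V" using V.span_is_subspace colsB by simp
  have vsK: "vectorspace class_ring (V.vs L.kerT)" using V.subspace_is_vs[OF subK] .
  have finK: "vectorspace.fin_dim class_ring (V.vs L.kerT)"
  proof -
    obtain Bs where Bs: "finite Bs" "kernel.basis n S Bs" using kernel_basis_exists[OF S] by blast
    interpret K: kernel n n S by (unfold_locales) (rule S)
    have "vectorspace.basis class_ring (V.vs L.kerT) Bs" using Bs(2) unfolding kerT by simp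
    then show ?thesis using Bs(1) vsK unfolding vectorspace.basis_def[OF vsK] vectorspace.fin_dim_def[OF vsK]
      by blast
  qed
  have finB: "vectorspace.fin_dim class_ring (V.vs (V.span (set (cols B))))"
    using V.fin_dim_span_cols[OF B] .
  have nest: "subspace class_ring (V.span (set (cols B))) (V.vs L.kerT)"
    using V.nested_subspaces[OF subK subB spanB] .
  have "V.rank B \<le> vectorspace.dim class_ring (V.vs L.kerT)"
    using vectorspace.subspace_dim[OF vsK nest finK] finB unfolding V.rank_def by simp
  then show ?thesis using dimn rankS by simp
qed

lemma rank_full_of_ker:
  fixes Y :: "real mat"
  assumes Y: "Y \<in> carrier_mat n p" and ker: "\<forall>w\<in>carrier_vec p. Y *\<^sub>v w = 0\<^sub>v n \<longrightarrow> w = 0\<^sub>v p"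
  shows "vec_space.rank n Y = p \<and> p \<le> n"
proof -
  interpret V: vec_space "TYPE(real)" n .
  have dist: "distinct (cols Y)"
  proof (rule ccontr)
    assume "\<not> distinct (cols Y)"
    then obtain i j where ij: "i < length (cols Y)" "j < length (cols Y)" "i \<noteq> j" "cols Y ! i = cols Y ! j"
      using distinct_conv_nth by blast
    then have ijp: "i < p" "j < p" using Y by auto
    define w where "w = vec p (\<lambda>k. (if k = i then 1 else 0) - (if k = j then 1 else (0::real)))"
    have wc: "w \<in> carrier_vec p" unfolding w_def by simp
    have "Y *\<^sub>v w = 0\<^sub>v n"
    proof (rule eq_vecI)
      fix r assume "r < dim_vec (0\<^sub>v n :: real vec)"
      then have r: "r < n" by simp
      have "(Y *\<^sub>v w) $ r = (\<Sum>k<p. Y $$ (r,k) * ((if k = i then 1 else 0) - (if k = j then 1 else 0)))"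
        using Y r unfolding w_def by (simp add: scalar_prod_def lessThan_atLeast0)
      also have "\<dots> = Y $$ (r,i) - Y $$ (r,j)"
        unfolding right_diff_distrib sum_subtractf if01_mult using ijp by (simp add: sum.delta)
      also have "\<dots> = 0"
      proof -
        have "col Y i $ r = col Y j $ r" using ij Y by simp
        then show ?thesis using r ijp Y by simp
      qed
      finally show "(Y *\<^sub>v w) $ r = 0\<^sub>v n $ r" using r by simp
    qed (use Y in simp)
    then have "w = 0\<^sub>v p" using ker wc by blast
    then have "w $ i = 0" using ijp by simp
    then show False unfolding w_def using ijp ij(3) by simp
  qed
  have li: "V.lin_indpt (set (cols Y))"
  proof
    assume "V.lin_dep (set (cols Y))"
    then obtain v where "v \<in> carrier_vec p" "v \<noteq> 0\<^sub>v p" "Y *\<^sub>v v = 0\<^sub>v n"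
      using V.lin_depE[OF Y _ dist] by blast
    then show False using ker by blast
  qed
  have rk: "V.rank Y = p" by (rule V.lin_indpt_full_rank[OF Y dist li])
  have "V.rank (0\<^sub>m n n) + V.rank Y \<le> n"
    by (rule rank_mult_zero[OF _ Y]) (use Y in auto)
  then show ?thesis using rk by simp
qed

lemma frob_minus:
  assumes "P \<in> carrier_mat r c" "Q \<in> carrier_mat r c" "M \<in> carrier_mat r c"
  shows "frob (P - Q) M = frob P M - frob Q M"
proof -
  have PQ: "P - Q \<in> carrier_mat r c" using assms(2) by (rule minus_carrier_mat)
  show ?thesis using frob_entry[OF PQ assms(3)] frob_entry[OF assms(1) assms(3)] frob_entry[OF assms(2) assms(3)] assms
    by (auto simp: sum_subtractf[symmetric] left_diff_distrib intro!: sum.cong)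
qed

lemma frob_adj:
  assumes A: "\<forall>i<m. A i j \<in> carrier_mat (n j) (n j)" and M: "M \<in> carrier_mat (n j) (n j)"
  shows "frob (adjblk m n A lam j) M = (\<Sum>i<m. lam $ i * frob (A i j) M)"
proof -
  have ad: "adjblk m n A lam j \<in> carrier_mat (n j) (n j)" unfolding adjblk_def by simp
  have "frob (adjblk m n A lam j) M = (\<Sum>a<n j. \<Sum>b<n j. (\<Sum>i<m. lam $ i * A i j $$ (b,a)) * M $$ (b,a))"
    using frob_entry[OF ad M] unfolding adjblk_def by simp
  also have "\<dots> = (\<Sum>a<n j. \<Sum>b<n j. \<Sum>i<m. lam $ i * (A i j $$ (b,a) * M $$ (b,a)))"
    by (simp add: sum_distrib_right mult.assoc)
  also have "\<dots> = (\<Sum>i<m. \<Sum>a<n j. \<Sum>b<n j. lam $ i * (A i j $$ (b,a) * M $$ (b,a)))"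
    by (simp add: sum.swap[of _ "{..<n j}" "{..<m}"] sum.swap[of _ "{..<n j}" "{..<m}"])
  also have "\<dots> = (\<Sum>i<m. lam $ i * frob (A i j) M)"
    using A M by (simp add: frob_entry[of _ "n j" "n j"] sum_distrib_left)
  finally show ?thesis .
qed

lemma cx_lemma:
  fixes A0 :: "real mat" and x lam :: "real vec"
  assumes A0: "A0 \<in> carrier_mat m d" and x: "x \<in> carrier_vec d" and lam: "lam \<in> carrier_vec m"
  shows "(transpose_mat A0 *\<^sub>v lam) \<bullet> x = (\<Sum>i<m. lam $ i * (row A0 i \<bullet> x))"
proof -
  have "(transpose_mat A0 *\<^sub>v lam) \<bullet> x = (\<Sum>k<d. (\<Sum>i<m. A0 $$ (i,k) * lam $ i) * x $ k)"
    using A0 x lam by (simp add: scalar_prod_def lessThan_atLeast0)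
  also have "\<dots> = (\<Sum>k<d. \<Sum>i<m. lam $ i * (A0 $$ (i,k) * x $ k))"
    unfolding sum_distrib_right by (intro sum.cong refl) (simp add: ac_simps)
  also have "\<dots> = (\<Sum>i<m. \<Sum>k<d. lam $ i * (A0 $$ (i,k) * x $ k))"
    by (rule sum.swap)
  also have "\<dots> = (\<Sum>i<m. lam $ i * (row A0 i \<bullet> x))"
    using A0 x by (simp add: scalar_prod_def lessThan_atLeast0 sum_distrib_left)
  finally show ?thesis .
qed

lemma obj_ident:
  assumes X: "\<forall>j\<in>{1..l}. X j \<in> carrier_mat (n j) (n j)"
    and Cc: "\<forall>j\<in>{1..l}. C j \<in> carrier_mat (n j) (n j)"
    and A: "\<forall>i<m. \<forall>j\<in>{1..l}. A i j \<in> carrier_mat (n j) (n j)"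
    and x: "x \<in> carrier_vec d" and A0: "A0 \<in> carrier_mat m d" and lam: "lam \<in> carrier_vec m"
    and c: "c = transpose_mat A0 *\<^sub>v lam" and b: "Aop m l A A0 X x = b"
  shows "obj l C c X x = (\<Sum>j=1..l. frob (Sblk m n A C lam j) (X j)) + lam \<bullet> b"
proof -
  have Sj: "frob (Sblk m n A C lam j) (X j) = frob (C j) (X j) - (\<Sum>i<m. lam $ i * frob (A i j) (X j))"
    if j: "j \<in> {1..l}" for j
  proof -
    have ad: "adjblk m n A lam j \<in> carrier_mat (n j) (n j)" unfolding adjblk_def by simp
    show ?thesis unfolding Sblk_def
      using frob_minus[OF Cc[rule_format, OF j] ad X[rule_format, OF j]]
        frob_adj[of m A j n, OF _ X[rule_format, OF j]] A j by auto
  qed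
  have lb: "lam \<bullet> b = (\<Sum>i<m. lam $ i * ((\<Sum>j=1..l. frob (A i j) (X j)) + row A0 i \<bullet> x))"
    unfolding b[symmetric] Aop_def using lam by (simp add: scalar_prod_def lessThan_atLeast0)
  have "obj l C c X x = (\<Sum>j=1..l. frob (C j) (X j)) + (\<Sum>i<m. lam $ i * (row A0 i \<bullet> x))"
    unfolding obj_def c using cx_lemma[OF A0 x lam] by simp
  also have "(\<Sum>j=1..l. frob (C j) (X j)) = (\<Sum>j=1..l. frob (Sblk m n A C lam j) (X j)) + (\<Sum>j=1..l. \<Sum>i<m. lam $ i * frob (A i j) (X j))"
    using Sj by (simp add: sum.distrib[symmetric])
  also have "(\<Sum>j=1..l. \<Sum>i<m. lam $ i * frob (A i j) (X j)) = (\<Sum>i<m. \<Sum>j=1..l. lam $ i * frob (A i j) (X j))"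
    by (rule sum.swap)
  also have "\<dots> = (\<Sum>i<m. lam $ i * (\<Sum>j=1..l. frob (A i j) (X j)))"
    by (simp add: sum_distrib_left)
  finally show ?thesis unfolding lb by (simp add: distrib_left sum.distrib)
qed

lemma frob_zero_right:
  assumes "P \<in> carrier_mat r r"
  shows "frob P (0\<^sub>m r r) = 0"
  unfolding frob_def mtrace_def using assms by (auto intro!: sum.neutral simp: scalar_prod_def)

lemma frob_YY:
  assumes S: "sym_mat n S" and Y: "Y \<in> carrier_mat n p" and SY: "S * Y = 0\<^sub>m n p"
  shows "frob S (Y * transpose_mat Y) = 0"
proof -
  have Sc: "S \<in> carrier_mat n n" and St: "transpose_mat S = S" using S unfolding sym_mat_def by auto
  have "transpose_mat S * (Y * transpose_mat Y) = (S * Y) * transpose_mat Y"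
    unfolding St by (rule assoc_mult_mat[symmetric]) (use Sc Y in auto)
  also have "\<dots> = 0\<^sub>m n n" unfolding SY using Y by simp
  finally show ?thesis unfolding frob_def mtrace_def by simp
qed

lemma psd_from_kernel:
  assumes Ssym: "sym_mat n S" and Y: "Y \<in> carrier_mat n p"
    and w: "w \<in> carrier_vec p" "w \<noteq> 0\<^sub>v p" "Y *\<^sub>v w = 0\<^sub>v n"
    and A: "\<forall>i<m. A i j \<in> carrier_mat n n"
    and so: "\<forall>U\<in>carrier_mat n p. Ablk m A j (U * transpose_mat Y) = 0\<^sub>v m \<longrightarrow> 0 \<le> frob S (U * transpose_mat U)"
  shows "psd_mat n S"
  unfolding psd_mat_def
proof (intro conjI ballI)
  show "sym_mat n S" by fact
  have Sc: "S \<in> carrier_mat n n" using Ssym unfolding sym_mat_def by auto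
  fix v :: "real vec" assume v: "v \<in> carrier_vec n"
  define U where "U = mat n p (\<lambda>(r,s). v $ r * w $ s)"
  have Uc: "U \<in> carrier_mat n p" unfolding U_def by simp
  have Yw: "(\<Sum>k<p. Y $$ (s,k) * w $ k) = 0" if "s < n" for s
  proof -
    have "(Y *\<^sub>v w) $ s = 0" using w(3) that by simp
    then show ?thesis using Y w(1) that by (simp add: scalar_prod_def lessThan_atLeast0)
  qed
  have UY: "U * transpose_mat Y = 0\<^sub>m n n"
  proof (rule eq_matI)
    fix r s assume "r < dim_row (0\<^sub>m n n :: real mat)" "s < dim_col (0\<^sub>m n n :: real mat)"
    then have rs: "r < n" "s < n" by auto
    have "(U * transpose_mat Y) $$ (r,s) = (\<Sum>k<p. v $ r * w $ k * Y $$ (s,k))"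
      using rs Y unfolding U_def by (simp add: scalar_prod_def lessThan_atLeast0)
    also have "\<dots> = v $ r * (\<Sum>k<p. Y $$ (s,k) * w $ k)"
      by (simp add: sum_distrib_left algebra_simps)
    also have "\<dots> = 0" using Yw[OF rs(2)] by simp
    finally show "(U * transpose_mat Y) $$ (r,s) = 0\<^sub>m n n $$ (r,s)" using rs by simp
  qed (use Y Uc in auto)
  have "Ablk m A j (U * transpose_mat Y) = 0\<^sub>v m"
    unfolding UY Ablk_def using frob_zero_right A by (auto intro!: eq_vecI)
  then have nn: "0 \<le> frob S (U * transpose_mat U)" using so Uc by blast
  define ww where "ww = (\<Sum>k<p. (w $ k)^2)"
  have UU: "(U * transpose_mat U) $$ (b,a) = ww * (v $ b * v $ a)" if "b < n" "a < n" for a b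
  proof -
    have "(U * transpose_mat U) $$ (b,a) = (\<Sum>k<p. (v $ b * w $ k) * (v $ a * w $ k))"
      using that unfolding U_def by (simp add: scalar_prod_def lessThan_atLeast0)
    also have "\<dots> = (\<Sum>k<p. (v $ b * v $ a) * (w $ k)^2)"
      by (intro sum.cong refl) (simp add: power2_eq_square)
    also have "\<dots> = ww * (v $ b * v $ a)"
      unfolding ww_def sum_distrib_left[symmetric] by simp
    finally show ?thesis .
  qed
  have "frob S (U * transpose_mat U) = (\<Sum>a<n. \<Sum>b<n. S $$ (b,a) * (U * transpose_mat U) $$ (b,a))"
    using frob_entry[OF Sc, of "U * transpose_mat U"] Uc by simp
  also have "\<dots> = (\<Sum>a<n. \<Sum>b<n. ww * (v $ b * S $$ (b,a) * v $ a))"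
    using UU by (intro sum.cong refl) simp
  also have "\<dots> = ww * (\<Sum>a<n. \<Sum>b<n. v $ b * S $$ (b,a) * v $ a)"
    by (simp add: sum_distrib_left)
  also have "(\<Sum>a<n. \<Sum>b<n. v $ b * S $$ (b,a) * v $ a) = qf n S (($) v) (($) v)"
    unfolding qf_def by (rule sum.swap)
  finally have f: "frob S (U * transpose_mat U) = ww * qf n S (($) v) (($) v)" .
  have wwpos: "0 < ww"
  proof -
    obtain k where k: "k < p" "w $ k \<noteq> 0" using w(1,2) by (metis carrier_vecD eq_vecI index_zero_vec)
    have "0 < (w $ k)^2" using k by simp
    also have "\<dots> \<le> ww" unfolding ww_def using k by (intro member_le_sum) auto
    finally show ?thesis .
  qed
  have "0 \<le> qf n S (($) v) (($) v)" using nn f wwpos by (simp add: zero_le_mult_iff)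
  then show "0 \<le> v \<bullet> (S *\<^sub>v v)" using scalar_mult_qf[OF Sc v] by simp
qed

theorem theorem12:
  fixes n :: "nat \<Rightarrow> nat" and l k d m :: nat
    and A :: "nat \<Rightarrow> nat \<Rightarrow> real mat" and A0 :: "real mat" and b :: "real vec"
    and C :: "nat \<Rightarrow> real mat" and c :: "real vec" and p :: "nat \<Rightarrow> nat"
  assumes kl: "1 \<le> k" "k \<le> l"
    and npos: "\<forall>j\<in>{1..l}. 0 < n j"
    and Asym: "\<forall>i<m. \<forall>j\<in>{1..l}. sym_mat (n j) (A i j)"
    and A0dim: "A0 \<in> carrier_mat m d"
    and bdim: "b \<in> carrier_vec m"
    and Csym: "\<forall>j\<in>{1..l}. sym_mat (n j) (C j)"
    and cdim: "c \<in> carrier_vec d"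
    and attained: "\<exists>X x. feas n l d m A A0 b X x \<and>
                     (\<forall>X' x'. feas n l d m A A0 b X' x' \<longrightarrow> obj l C c X x \<le> obj l C c X' x')"
    and ppos: "\<forall>j\<in>{1..k}. 0 < p j"
    and spur: "\<exists>Y Xb x. spurious_two_critical n l k d m A A0 b C c p Y Xb x"
  shows "\<exists>lam\<in>carrier_vec m. \<exists>Z :: nat \<Rightarrow> real mat.
           (\<forall>j\<in>{1..l}. sym_mat (n j) (Z j) \<and> C j = Z j + adjblk m n A lam j) \<and>
           c = 0\<^sub>v d + transpose_mat A0 *\<^sub>v lam \<and>
           (\<exists>j\<in>{1..k}. p j \<le> n j \<and> mrank (Z j) \<le> n j - p j) \<and>
           (\<exists>X x. feas n l d m A A0 b X x \<and>
                  (\<forall>j\<in>{k+1..l}. mrank (Z j) \<le> n j - mrank (X j)))"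
proof -
  from spur obtain Y Xb x where sp: "spurious_two_critical n l k d m A A0 b C c p Y Xb x" by blast
  then have bf: "bm_feas n l k d m A A0 b p Y Xb x"
    and ngm: "\<not> bm_global_min n l k d m A A0 b C c p Y Xb x"
    unfolding spurious_two_critical_def two_critical_def by auto
  from sp obtain lam where lam: "lam \<in> carrier_vec m"
    and psdS: "\<forall>j\<in>{k+1..l}. psd_mat (n j) (Sblk m n A C lam j)"
    and cs: "(\<Sum>j=k+1..l. frob (Sblk m n A C lam j) (Xb j)) = 0"
    and sv: "svec A0 c lam = 0\<^sub>v d"
    and SY: "\<forall>j\<in>{1..k}. Sblk m n A C lam j * Y j = 0\<^sub>m (n j) (p j)"
    and so: "\<forall>j\<in>{1..k}. \<forall>U\<in>carrier_mat (n j) (p j).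
            Ablk m A j (U * transpose_mat (Y j)) = 0\<^sub>v m \<longrightarrow>
            0 \<le> frob (Sblk m n A C lam j) (U * transpose_mat U)"
    unfolding spurious_two_critical_def two_critical_def by blast
  define S where "S = Sblk m n A C lam"
  define X where "X = qY k Y Xb"
  have Ydim: "\<forall>j\<in>{1..k}. Y j \<in> carrier_mat (n j) (p j)" and fe: "feas n l d m A A0 b X x"
    using bf unfolding bm_feas_def X_def by auto
  have Xpsd: "\<forall>j\<in>{1..l}. psd_mat (n j) (X j)" and xd: "x \<in> carrier_vec d" and Ab: "Aop m l A A0 X x = b"
    using fe unfolding feas_def by auto
  have Ac: "\<forall>i<m. \<forall>j\<in>{1..l}. A i j \<in> carrier_mat (n j) (n j)" using Asym unfolding sym_mat_def by auto
  have Cc: "\<forall>j\<in>{1..l}. C j \<in> carrier_mat (n j) (n j)" using Csym unfolding sym_mat_def by auto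
  have Sc: "S j \<in> carrier_mat (n j) (n j)" if "j \<in> {1..l}" for j
    unfolding S_def Sblk_def by (rule minus_carrier_mat) (simp add: adjblk_def)
  have Sent: "S j $$ (r,s) = C j $$ (r,s) - (\<Sum>i<m. lam $ i * A i j $$ (r,s))"
    if "j \<in> {1..l}" "r < n j" "s < n j" for j r s
    unfolding S_def Sblk_def using Cc that by (simp add: adjblk_def)
  have Ssym: "sym_mat (n j) (S j)" if j: "j \<in> {1..l}" for j
    unfolding sym_mat_def
  proof (intro conjI)
    show "S j \<in> carrier_mat (n j) (n j)" using Sc[OF j] .
    show "transpose_mat (S j) = S j"
    proof (rule eq_matI)
      fix r s assume "r < dim_row (S j)" "s < dim_col (S j)"
      then have rs: "r < n j" "s < n j" using Sc[OF j] by auto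
      have "C j $$ (s,r) = C j $$ (r,s)" using Csym j rs unfolding sym_mat_def
        by (metis carrier_matD index_transpose_mat(1))
      moreover have "A i j $$ (s,r) = A i j $$ (r,s)" if "i < m" for i
        using Asym j rs that unfolding sym_mat_def by (metis carrier_matD index_transpose_mat(1))
      ultimately show "transpose_mat (S j) $$ (r,s) = S j $$ (r,s)"
        using Sent[OF j rs] Sent[OF j rs(2) rs(1)] Sc[OF j] rs by simp
    qed (use Sc[OF j] in auto)
  qed
  have Cdec: "C j = S j + adjblk m n A lam j" if j: "j \<in> {1..l}" for j
  proof (rule eq_matI)
    fix r s assume "r < dim_row (S j + adjblk m n A lam j)" "s < dim_col (S j + adjblk m n A lam j)"
    then have rs: "r < n j" "s < n j" using Sc[OF j] by (auto simp: adjblk_def)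
    show "C j $$ (r,s) = (S j + adjblk m n A lam j) $$ (r,s)"
      using Sent[OF j rs] Sc[OF j] rs by (simp add: adjblk_def)
  qed (use Sc[OF j] Cc j in \<open>auto simp: adjblk_def\<close>)
  have ceq: "c = 0\<^sub>v d + transpose_mat A0 *\<^sub>v lam"
  proof (rule eq_vecI)
    fix i assume "i < dim_vec (0\<^sub>v d + transpose_mat A0 *\<^sub>v lam)"
    then have i: "i < d" using A0dim by simp
    have "(c - transpose_mat A0 *\<^sub>v lam) $ i = 0" using sv i unfolding svec_def by simp
    then show "c $ i = (0\<^sub>v d + transpose_mat A0 *\<^sub>v lam) $ i" using i cdim A0dim by simp
  qed (use cdim A0dim in simp)
  have tv: "transpose_mat A0 *\<^sub>v lam \<in> carrier_vec d"
    using mult_mat_vec_carrier[OF transpose_carrier_mat[THEN iffD2, OF A0dim] lam] .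
  have c2: "c = transpose_mat A0 *\<^sub>v lam" using ceq unfolding left_zero_vec[OF tv] .
  have mrS: "mrank (S j) = vec_space.rank (n j) (S j)" if "j \<in> {1..l}" for j
    unfolding mrank_def using Sc[OF that] by simp
  have Xk: "X j = Xb j" if "j \<in> {k+1..l}" for j using that unfolding X_def qY_def by simp
  have jl: "j \<in> {1..l}" if "j \<in> {k+1..l}" for j using that kl by auto
  have nonneg: "0 \<le> frob (S j) (Xb j)" if "j \<in> {k+1..l}" for j
    using psd_frob_nonneg[OF psdS[rule_format, OF that, folded S_def] Xpsd[rule_format, OF jl[OF that], unfolded Xk[OF that]]] .
  have zero: "frob (S j) (Xb j) = 0" if "j \<in> {k+1..l}" for j
    using cs[folded S_def] nonneg that by (subst (asm) sum_nonneg_eq_0_iff) auto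
  have part2: "\<forall>j\<in>{k+1..l}. mrank (S j) \<le> n j - mrank (X j)"
  proof
    fix j assume j: "j \<in> {k+1..l}"
    have pX: "psd_mat (n j) (Xb j)" using Xpsd[rule_format, OF jl[OF j]] unfolding Xk[OF j] .
    have "S j * Xb j = 0\<^sub>m (n j) (n j)"
      by (rule psd_frob_zero[OF psdS[rule_format, OF j, folded S_def] pX zero[OF j]])
    then have "vec_space.rank (n j) (S j) + vec_space.rank (n j) (Xb j) \<le> n j"
      using rank_mult_zero[OF Sc[OF jl[OF j]] psd_carrier[OF pX]] by simp
    moreover have "mrank (X j) = vec_space.rank (n j) (Xb j)"
      unfolding mrank_def Xk[OF j] using psd_carrier[OF pX] by simp
    ultimately show "mrank (S j) \<le> n j - mrank (X j)" using mrS[OF jl[OF j]] by simp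
  qed
  have part1: "\<exists>j\<in>{1..k}. p j \<le> n j \<and> mrank (S j) \<le> n j - p j"
  proof (rule ccontr)
    assume neg: "\<not> (\<exists>j\<in>{1..k}. p j \<le> n j \<and> mrank (S j) \<le> n j - p j)"
    have jkl: "j \<in> {1..l}" if "j \<in> {1..k}" for j using that kl by auto
    have psd1: "psd_mat (n j) (S j)" if j: "j \<in> {1..k}" for j
    proof (cases "\<exists>w\<in>carrier_vec (p j). w \<noteq> 0\<^sub>v (p j) \<and> Y j *\<^sub>v w = 0\<^sub>v (n j)")
      case True
      then obtain w where w: "w \<in> carrier_vec (p j)" "w \<noteq> 0\<^sub>v (p j)" "Y j *\<^sub>v w = 0\<^sub>v (n j)" by blast
      show ?thesis
        using psd_from_kernel[OF Ssym[OF jkl[OF j]] Ydim[rule_format, OF j] w, of m A j] Ac jkl[OF j] so j S_def by auto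
    next
      case False
      then have "\<forall>w\<in>carrier_vec (p j). Y j *\<^sub>v w = 0\<^sub>v (n j) \<longrightarrow> w = 0\<^sub>v (p j)" by blast
      from rank_full_of_ker[OF Ydim[rule_format, OF j] this]
      have rk: "vec_space.rank (n j) (Y j) = p j" "p j \<le> n j" by auto
      have "vec_space.rank (n j) (S j) + vec_space.rank (n j) (Y j) \<le> n j"
        using rank_mult_zero[OF Sc[OF jkl[OF j]] Ydim[rule_format, OF j]] SY j S_def by simp
      then have "mrank (S j) \<le> n j - p j" using rk mrS[OF jkl[OF j]] by simp
      then show ?thesis using neg j rk by blast
    qed
    have psdall: "psd_mat (n j) (S j)" if "j \<in> {1..l}" for j
    proof (cases "j \<le> k")
      case True then show ?thesis using psd1 that by auto
    next
      case False then show ?thesis using psdS that S_def by auto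
    qed
    have Xc: "\<forall>j\<in>{1..l}. X j \<in> carrier_mat (n j) (n j)" using Xpsd psd_carrier by blast
    have ours: "obj l C c X x = lam \<bullet> b"
    proof -
      have "obj l C c X x = (\<Sum>j=1..l. frob (S j) (X j)) + lam \<bullet> b"
        using obj_ident[OF Xc Cc Ac xd A0dim lam c2 Ab] unfolding S_def .
      moreover have "(\<Sum>j=1..l. frob (S j) (X j)) = 0"
      proof -
        have un: "{1..l} = {1..k} \<union> {k+1..l}" using kl by auto
        have "(\<Sum>j=1..l. frob (S j) (X j)) = (\<Sum>j=1..k. frob (S j) (X j)) + (\<Sum>j=k+1..l. frob (S j) (X j))"
          unfolding un by (rule sum.union_disjoint) auto
        moreover have "(\<Sum>j=1..k. frob (S j) (X j)) = 0"
        proof (rule sum.neutral, rule ballI)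
          fix j assume j: "j \<in> {1..k}"
          have "X j = Y j * transpose_mat (Y j)" using j unfolding X_def qY_def by simp
          then show "frob (S j) (X j) = 0"
            using frob_YY[OF Ssym[OF jkl[OF j]] Ydim[rule_format, OF j]] SY j S_def by simp
        qed
        moreover have "(\<Sum>j=k+1..l. frob (S j) (X j)) = 0" using zero Xk by simp
        ultimately show ?thesis by simp
      qed
      ultimately show ?thesis by simp
    qed
    have "bm_global_min n l k d m A A0 b C c p Y Xb x"
      unfolding bm_global_min_def
    proof (intro conjI allI impI)
      show "bm_feas n l k d m A A0 b p Y Xb x" by fact
      fix Y' Xb' x' assume bf': "bm_feas n l k d m A A0 b p Y' Xb' x'"
      then have fe': "feas n l d m A A0 b (qY k Y' Xb') x'" unfolding bm_feas_def by auto
      then have Xpsd': "\<forall>j\<in>{1..l}. psd_mat (n j) (qY k Y' Xb' j)" and xd': "x' \<in> carrier_vec d"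
        and Ab': "Aop m l A A0 (qY k Y' Xb') x' = b"
        unfolding feas_def by auto
      have Xc': "\<forall>j\<in>{1..l}. qY k Y' Xb' j \<in> carrier_mat (n j) (n j)" using Xpsd' psd_carrier by blast
      have "obj l C c (qY k Y' Xb') x' = (\<Sum>j=1..l. frob (S j) (qY k Y' Xb' j)) + lam \<bullet> b"
        using obj_ident[OF Xc' Cc Ac xd' A0dim lam c2 Ab'] unfolding S_def .
      moreover have "0 \<le> (\<Sum>j=1..l. frob (S j) (qY k Y' Xb' j))"
        by (rule sum_nonneg) (use psd_frob_nonneg psdall Xpsd' in blast)
      ultimately show "obj l C c (qY k Y Xb) x \<le> obj l C c (qY k Y' Xb') x'"
        using ours unfolding X_def by simp
    qed
    then show False using ngm by blast
  qed
  show ?thesis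
    apply (rule bexI[OF _ lam])
    apply (rule exI[of _ S])
    using Ssym Cdec ceq part1 fe part2 by blast
qed

end
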